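(* Let $n\geq 3$ and $m\geq 1$. The matching $\mu$ on the face poset of $\Delta_m^{n,2}$ has no critical cells of dimension $2$.
   Context: $\Delta_m^{n,2}=\mathrm{VR}(\{0,\ldots,m\}^n;2)$, where $\{0,\ldots,m\}^n$ carries the Manhattan metric $d(x,y)=\sum_i|x_i-y_i|$ and $\mathrm{VR}(X;r)$ is the complex of finite subsets of diameter $\leq r$. Order the vertices as $v_1\prec\cdots\prec v_N$ ($N=(m+1)^n$) in the anti-lexicographic order ($x\prec y$ iff at the largest index $i$ with $x_i\neq y_i$, $x_i<y_i$). Let $T_0$ be the set of all simplices of $\Delta_m^{n,2}$, including the empty simplex. For $i=1,\ldots,N$ put $S_i=\{\sigma\in T_{i-1}: v_i\notin\sigma,\ \sigma\cup\{v_i\}\in T_{i-1}\}$, $\mu(\sigma)=\sigma\cup\{v_i\}$ for $\sigma\in S_i$, and $T_i=T_{i-1}\setminus(S_i\cup\{\sigma\cup\{v_i\}:\sigma\in S_i\})$. The critical cells of $\mu$ are the simplices in $T_N$; the dimension of a simplex is its cardinality minus one. *)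

theory Defs
  imports Main
begin

definition grid :: "nat \<Rightarrow> nat \<Rightarrow> nat list set" where
  "grid n m = {x. length x = n \<and> (\<forall>i<n. x ! i \<le> m)}"

definition manhattan :: "nat list \<Rightarrow> nat list \<Rightarrow> nat" where
  "manhattan x y = (\<Sum>i<length x. (x ! i - y ! i) + (y ! i - x ! i))"

text \<open>Vietoris--Rips complex VR(X; r): finite subsets of diameter at most r (empty set included).\<close>
definition VR :: "nat list set \<Rightarrow> nat \<Rightarrow> nat list set set" where
  "VR X r = {\<sigma>. \<sigma> \<subseteq> X \<and> finite \<sigma> \<and> (\<forall>x\<in>\<sigma>. \<forall>y\<in>\<sigma>. manhattan x y \<le> r)}"

definition Delta :: "nat \<Rightarrow> nat \<Rightarrow> nat list set set" where
  "Delta n m = VR (grid n m) 2"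

definition antilex_less :: "nat list \<Rightarrow> nat list \<Rightarrow> bool" where
  "antilex_less x y \<longleftrightarrow> (\<exists>i<length x. x ! i < y ! i \<and> (\<forall>j. i < j \<and> j < length x \<longrightarrow> x ! j = y ! j))"

definition vertex_list :: "nat \<Rightarrow> nat \<Rightarrow> nat list list" where
  "vertex_list n m = (THE vs. set vs = grid n m \<and> sorted_wrt antilex_less vs)"

definition match_set :: "nat list set set \<Rightarrow> nat list \<Rightarrow> nat list set set" where
  "match_set T v = {\<sigma>\<in>T. v \<notin> \<sigma> \<and> insert v \<sigma> \<in> T}"

definition match_step :: "nat list set set \<Rightarrow> nat list \<Rightarrow> nat list set set" where
  "match_step T v = T - (match_set T v \<union> (insert v) ` match_set T v)"

definition critical_cells :: "nat \<Rightarrow> nat \<Rightarrow> nat list set set" where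
  "critical_cells n m = foldl match_step (Delta n m) (vertex_list n m)"

end

theory Submission
  imports Defs
begin


definition NN :: "nat \<Rightarrow> (nat \<Rightarrow> int) \<Rightarrow> int" where
  "NN n f = (\<Sum>i<n. \<bar>f i\<bar>)"
definition posv :: "nat \<Rightarrow> (nat \<Rightarrow> int) \<Rightarrow> bool" where
  "posv n f = (\<exists>i<n. 0 < f i \<and> (\<forall>j. i < j \<and> j < n \<longrightarrow> f j = 0))"
definition negv :: "nat \<Rightarrow> (nat \<Rightarrow> int) \<Rightarrow> bool" where
  "negv n f = (\<exists>i<n. f i < 0 \<and> (\<forall>j. i < j \<and> j < n \<longrightarrow> f j = 0))"
definition feas :: "int \<Rightarrow> int \<Rightarrow> int \<Rightarrow> int \<Rightarrow> bool" where
  "feas x w a b = (x = w \<or> x = 0 \<or> (x = -1 \<and> (w \<le> -1 \<or> a \<le> -1 \<or> b \<le> -1)) \<or> (x = 1 \<and> (1 \<le> a \<or> 1 \<le> b)))"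

lemma NN_upd: "k < n \<Longrightarrow> NN n (f(k := v)) = NN n f - \<bar>f k\<bar> + \<bar>v\<bar>"
proof -
  assume k: "k < n"
  have "NN n (f(k := v)) = \<bar>v\<bar> + (\<Sum>i\<in>{..<n}-{k}. \<bar>f i\<bar>)"
    unfolding NN_def using k sum.remove[of "{..<n}" k "\<lambda>i. \<bar>(f(k:=v)) i\<bar>"] by simp
  moreover have "NN n f = \<bar>f k\<bar> + (\<Sum>i\<in>{..<n}-{k}. \<bar>f i\<bar>)"
    unfolding NN_def using k sum.remove[of "{..<n}" k "\<lambda>i. \<bar>f i\<bar>"] by simp
  ultimately show ?thesis by simp
qed

lemma NN_neg: "NN n (\<lambda>i. - f i) = NN n f"
  by (simp add: NN_def)

lemma NN_swap: "NN n (\<lambda>i. f i - g i) = NN n (\<lambda>i. g i - f i)"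
  by (simp add: NN_def abs_minus_commute)

lemma NN_nonneg: "0 \<le> NN n f" by (simp add: NN_def sum_nonneg)

lemma N_lower:
  assumes "\<And>i. i < n \<Longrightarrow> \<bar>f i\<bar> - \<bar>g i\<bar> + h i \<le> \<bar>f i - g i\<bar>"
  shows "NN n f - NN n g + sum h {..<n} \<le> NN n (\<lambda>i. f i - g i)"
proof -
  have "(\<Sum>i<n. \<bar>f i\<bar> - \<bar>g i\<bar> + h i) \<le> (\<Sum>i<n. \<bar>f i - g i\<bar>)"
    by (rule sum_mono) (use assms in auto)
  then show ?thesis by (simp add: NN_def sum.distrib sum_subtractf)
qed

lemma one_pt: "k < n \<Longrightarrow> NN n (\<lambda>i. ((\<lambda>i. 0)(k := -1)) i - X i) = NN n X - \<bar>X k\<bar> + \<bar>-1 - X k\<bar>"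
proof -
  assume k: "k < n"
  have "(\<lambda>i. ((\<lambda>i. 0)(k := -1)) i - X i) = (\<lambda>i. - X i)(k := -1 - X k)" by (rule ext) auto
  then show ?thesis using NN_upd[OF k, of "\<lambda>i. - X i"] by (simp add: NN_neg)
qed

lemma two_pt: "j < n \<Longrightarrow> k < n \<Longrightarrow> j \<noteq> k \<Longrightarrow>
  NN n (\<lambda>i. ((\<lambda>i. 0)(k := -1, j := s)) i - X i) = NN n X - \<bar>X k\<bar> + \<bar>-1 - X k\<bar> - \<bar>X j\<bar> + \<bar>s - X j\<bar>"
proof -
  assume j: "j < n" and k: "k < n" and jk: "j \<noteq> k"
  have "(\<lambda>i. ((\<lambda>i. 0)(k := -1, j := s)) i - X i) = ((\<lambda>i. - X i)(k := -1 - X k))(j := s - X j)"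
    by (rule ext) auto
  then show ?thesis using NN_upd[OF j, of "(\<lambda>i. - X i)(k := -1 - X k)"] NN_upd[OF k, of "\<lambda>i. - X i"] jk
    by (simp add: NN_neg)
qed

lemma NN_two_pt: "j < n \<Longrightarrow> k < n \<Longrightarrow> j \<noteq> k \<Longrightarrow> \<bar>s\<bar> = 1 \<Longrightarrow> NN n ((\<lambda>i. 0)(k := -1, j := s)) = 2"
  using two_pt[of j n k s "\<lambda>i. 0"] by (simp add: NN_def)

lemma NN_one_pt: "k < n \<Longrightarrow> NN n ((\<lambda>i. 0)(k := -1)) = 1"
  using one_pt[of k n "\<lambda>i. 0"] by (simp add: NN_def)

lemma negv_two_pt: "j < k \<Longrightarrow> k < n \<Longrightarrow> negv n ((\<lambda>i. 0)(k := -1, j := s))"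
  unfolding negv_def by (rule exI[of _ k]) auto

lemma negv_one_pt: "k < n \<Longrightarrow> negv n ((\<lambda>i. 0)(k := -1))"
  unfolding negv_def by (rule exI[of _ k]) auto

lemma F1:
  assumes k: "k < n" and Wk: "W k < 0" and Wabove: "\<forall>i. k < i \<and> i < n \<longrightarrow> W i = 0"
    and Xk: "0 \<le> X k" and WX: "NN n (\<lambda>i. W i - X i) \<le> 2" and NW: "3 \<le> NN n W" and NX: "NN n X \<le> 2"
    and i: "k \<le> i" "i < n"
  shows "X i = 0"
proof -
  let ?h = "\<lambda>i. if k \<le> i then 2 * \<bar>X i\<bar> else 0"
  have "NN n W - NN n X + sum ?h {..<n} \<le> NN n (\<lambda>i. W i - X i)"
  proof (rule N_lower)
    fix i assume "i < n"
    show "\<bar>W i\<bar> - \<bar>X i\<bar> + ?h i \<le> \<bar>W i - X i\<bar>"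
    proof (cases "k \<le> i")
      case True
      show ?thesis
      proof (cases "i = k")
        case True then show ?thesis using Wk Xk by auto
      next
        case False then have "W i = 0" using Wabove \<open>k \<le> i\<close> \<open>i < n\<close> by auto
        then show ?thesis using \<open>k \<le> i\<close> by auto
      qed
    next
      case False then show ?thesis by auto
    qed
  qed
  moreover have "?h i \<le> sum ?h {..<n}"
    by (rule member_le_sum) (use i in auto)
  ultimately show ?thesis using WX NW NX i by auto
qed

lemma common_unit:
  assumes "NN n A = 2" "NN n B = 2" "NN n (\<lambda>i. A i - B i) \<le> 2"
  shows "\<exists>j<n. (1 \<le> A j \<and> 1 \<le> B j) \<or> (A j \<le> -1 \<and> B j \<le> -1)"
proof (rule ccontr)
  assume H: "\<not> ?thesis"
  have "NN n A - NN n B + sum (\<lambda>i. 2 * \<bar>B i\<bar>) {..<n} \<le> NN n (\<lambda>i. A i - B i)"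
  proof (rule N_lower)
    fix i assume "i < n"
    with H have "\<not> ((1 \<le> A i \<and> 1 \<le> B i) \<or> (A i \<le> -1 \<and> B i \<le> -1))" by auto
    then show "\<bar>A i\<bar> - \<bar>B i\<bar> + 2 * \<bar>B i\<bar> \<le> \<bar>A i - B i\<bar>" by auto
  qed
  moreover have "sum (\<lambda>i. 2 * \<bar>B i\<bar>) {..<n} = 2 * NN n B"
    by (simp add: NN_def sum_distrib_left)
  ultimately show False using assms by simp
qed

lemma nonzero_coord: "1 \<le> NN n X \<Longrightarrow> \<exists>j<n. X j \<noteq> 0"
  by (rule ccontr) (simp add: NN_def)

lemma sum_two_pts:
  fixes k l n :: nat
  assumes "k < n" "l < n" "k \<noteq> l"
  shows "(\<Sum>i<n. if i = k \<or> i = l then g i else (0::int)) = g k + g l"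
proof -
  have e: "sum g ({..<n} \<inter> {k, l}) = (\<Sum>i<n. if i \<in> {k,l} then g i else 0)"
    by (rule sum.inter_restrict) (rule finite_lessThan)
  have "{..<n} \<inter> {k, l} = {k, l}" using assms by auto
  then have "sum g ({..<n} \<inter> {k, l}) = g k + g l" using assms by simp
  with e show ?thesis by simp
qed

lemma one_fail:
  assumes k: "k < n" and Wk: "W k < 0" and Wabove: "\<forall>i. k < i \<and> i < n \<longrightarrow> W i = 0"
    and NW: "3 \<le> NN n W" and Xk: "0 \<le> X k" and NX: "NN n X = 2"
    and Yfine: "Y k \<le> -1 \<or> NN n Y \<le> 1" and pY: "posv n Y" and NY: "NN n Y \<le> 2"
    and WX: "NN n (\<lambda>i. W i - X i) \<le> 2" and WY: "NN n (\<lambda>i. W i - Y i) \<le> 2"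
  shows "\<exists>W'. negv n W' \<and> NN n W' \<le> 2 \<and> NN n (\<lambda>i. W' i - X i) \<le> 2 \<and> NN n (\<lambda>i. W' i - Y i) \<le> 2
     \<and> (\<forall>i<n. feas (W' i) (W i) (X i) (Y i))"
proof -
  have Xvan: "X i = 0" if "k \<le> i" "i < n" for i
    using F1[OF k Wk Wabove Xk WX NW] NX that by auto
  show ?thesis
  proof (cases "Y k \<le> -1")
    case True
    obtain j where j: "j < n" "X j \<noteq> 0" using nonzero_coord[of n X] NX by auto
    have jk: "j < k"
    proof (rule ccontr)
      assume "\<not> j < k"
      then have "X j = 0" using Xvan j(1) by simp
      with j(2) show False by auto
    qed
    define s :: int where "s = (if 0 < X j then 1 else -1)"
    define W' where "W' = (\<lambda>i. (0::int))(k := -1, j := s)"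
    have Xk0: "X k = 0" using Xvan k by auto
    have "NN n (\<lambda>i. W' i - X i) = NN n X - \<bar>X k\<bar> + \<bar>-1 - X k\<bar> - \<bar>X j\<bar> + \<bar>s - X j\<bar>"
      unfolding W'_def by (rule two_pt) (use j k jk in auto)
    also have "\<dots> = 2" using NX Xk0 j(2) unfolding s_def by auto
    finally have 1: "NN n (\<lambda>i. W' i - X i) \<le> 2" by simp
    have "NN n (\<lambda>i. W' i - Y i) = NN n Y - \<bar>Y k\<bar> + \<bar>-1 - Y k\<bar> - \<bar>Y j\<bar> + \<bar>s - Y j\<bar>"
      unfolding W'_def by (rule two_pt) (use j k jk in auto)
    also have "\<dots> \<le> 2" using NY True unfolding s_def by auto
    finally have 2: "NN n (\<lambda>i. W' i - Y i) \<le> 2" .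
    have 3: "NN n W' \<le> 2" unfolding W'_def using NN_two_pt[of j n k s] j k jk by (auto simp: s_def)
    have 4: "negv n W'" unfolding W'_def using negv_two_pt[OF jk k] .
    have 5: "\<forall>i<n. feas (W' i) (W i) (X i) (Y i)"
      using Wk j(2) jk unfolding W'_def feas_def s_def by auto
    show ?thesis using 1 2 3 4 5 by blast
  next
    case False
    then have Yk: "0 \<le> Y k" and NY1: "NN n Y \<le> 1" using Yfine by auto
    obtain l where l: "l < n" "0 < Y l" using pY unfolding posv_def by auto
    have Wl: "1 \<le> W l"
    proof (rule ccontr)
      assume "\<not> 1 \<le> W l"
      then have Wl0: "W l \<le> 0" by simp
      have "NN n W - NN n Y + sum (\<lambda>i. if i = l then 2 * \<bar>Y i\<bar> else 0) {..<n} \<le> NN n (\<lambda>i. W i - Y i)"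
        by (rule N_lower) (use Wl0 l in auto)
      moreover have "sum (\<lambda>i. if i = l then 2 * \<bar>Y i\<bar> else 0) {..<n} = 2 * \<bar>Y l\<bar>"
        using l by simp
      ultimately show False using NW NY1 WY l by simp
    qed
    have NW3: "NN n W \<le> 3"
    proof -
      have "NN n W - NN n Y + sum (\<lambda>i. 0) {..<n} \<le> NN n (\<lambda>i. W i - Y i)"
        by (rule N_lower) auto
      then show ?thesis using NY1 WY by simp
    qed
    have lk: "l < k"
    proof -
      have "l \<noteq> k" using Wl Wk by auto
      moreover have "\<not> k < l" using Wabove Wl l by auto
      ultimately show ?thesis by simp
    qed
    have Xk0: "X k = 0" using Xvan k by auto
    have Xl: "1 \<le> X l"
    proof (rule ccontr)
      assume "\<not> 1 \<le> X l"
      then have Xl0: "X l \<le> 0" by simp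
      let ?h = "\<lambda>i. if i = k \<or> i = l then 2 * \<bar>W i\<bar> else 0"
      have "NN n X - NN n W + sum ?h {..<n} \<le> NN n (\<lambda>i. X i - W i)"
        by (rule N_lower) (use Xl0 Wl Xk0 in auto)
      moreover have "sum ?h {..<n} = 2 * \<bar>W k\<bar> + 2 * \<bar>W l\<bar>"
        using sum_two_pts[of k n l "\<lambda>i. 2 * \<bar>W i\<bar>"] k l lk by simp
      moreover have "NN n (\<lambda>i. X i - W i) = NN n (\<lambda>i. W i - X i)" by (rule NN_swap)
      ultimately show False using NX NW3 WX Wk Wl by simp
    qed
    define W' where "W' = (\<lambda>i. (0::int))(k := -1, l := 1)"
    have "NN n (\<lambda>i. W' i - X i) = NN n X - \<bar>X k\<bar> + \<bar>-1 - X k\<bar> - \<bar>X l\<bar> + \<bar>1 - X l\<bar>"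
      unfolding W'_def by (rule two_pt) (use l k lk in auto)
    also have "\<dots> = 2" using NX Xk0 Xl by auto
    finally have 1: "NN n (\<lambda>i. W' i - X i) \<le> 2" by simp
    have "NN n (\<lambda>i. W' i - Y i) = NN n Y - \<bar>Y k\<bar> + \<bar>-1 - Y k\<bar> - \<bar>Y l\<bar> + \<bar>1 - Y l\<bar>"
      unfolding W'_def by (rule two_pt) (use l k lk in auto)
    also have "\<dots> \<le> 2" using NY1 Yk l by auto
    finally have 2: "NN n (\<lambda>i. W' i - Y i) \<le> 2" .
    have 3: "NN n W' \<le> 2" unfolding W'_def using NN_two_pt[of l n k 1] l k lk by auto
    have 4: "negv n W'" unfolding W'_def using negv_two_pt[OF lk k] .
    have 5: "\<forall>i<n. feas (W' i) (W i) (X i) (Y i)"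
      using Wk Xl lk unfolding W'_def feas_def by auto
    show ?thesis using 1 2 3 4 5 by blast
  qed
qed

lemma core:
  fixes A B W :: "nat \<Rightarrow> int"
  assumes pA: "posv n A" and pB: "posv n B" and nW: "negv n W"
    and nA: "NN n A \<le> 2" and nB: "NN n B \<le> 2" and nAB: "NN n (\<lambda>i. A i - B i) \<le> 2"
    and nWA: "NN n (\<lambda>i. W i - A i) \<le> 2" and nWB: "NN n (\<lambda>i. W i - B i) \<le> 2"
  shows "\<exists>W'. negv n W' \<and> NN n W' \<le> 2 \<and> NN n (\<lambda>i. W' i - A i) \<le> 2 \<and> NN n (\<lambda>i. W' i - B i) \<le> 2
     \<and> (\<forall>i<n. feas (W' i) (W i) (A i) (B i))"
proof (cases "NN n W \<le> 2")
  case True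
  then show ?thesis using nW nWA nWB by (intro exI[of _ W]) (auto simp: feas_def)
next
  case False
  then have NW: "3 \<le> NN n W" by simp
  obtain k where k: "k < n" "W k < 0" and Wabove: "\<forall>i. k < i \<and> i < n \<longrightarrow> W i = 0"
    using nW unfolding negv_def by auto
  show ?thesis
  proof (cases "A k \<le> -1 \<or> NN n A \<le> 1")
    case Afine: True
    show ?thesis
    proof (cases "B k \<le> -1 \<or> NN n B \<le> 1")
      case Bfine: True
      define W' where "W' = (\<lambda>i. (0::int))(k := -1)"
      have "NN n (\<lambda>i. W' i - A i) = NN n A - \<bar>A k\<bar> + \<bar>-1 - A k\<bar>"
        unfolding W'_def by (rule one_pt) (rule k)
      also have "\<dots> \<le> 2" using Afine nA NN_nonneg[of n A] by auto
      finally have 1: "NN n (\<lambda>i. W' i - A i) \<le> 2" .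
      have "NN n (\<lambda>i. W' i - B i) = NN n B - \<bar>B k\<bar> + \<bar>-1 - B k\<bar>"
        unfolding W'_def by (rule one_pt) (rule k)
      also have "\<dots> \<le> 2" using Bfine nB by auto
      finally have 2: "NN n (\<lambda>i. W' i - B i) \<le> 2" .
      have 3: "NN n W' \<le> 2" unfolding W'_def using NN_one_pt[OF k(1)] by simp
      have 4: "negv n W'" unfolding W'_def using negv_one_pt[OF k(1)] .
      have 5: "\<forall>i<n. feas (W' i) (W i) (A i) (B i)"
        using k unfolding W'_def feas_def by auto
      show ?thesis using 1 2 3 4 5 by blast
    next
      case Bfail: False
      then have "0 \<le> B k" "NN n B = 2" using nB by auto
      from one_fail[OF k Wabove NW this Afine pA nA nWB nWA]
      show ?thesis by (auto simp: feas_def)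
    qed
  next
    case Afail: False
    then have Ak: "0 \<le> A k" "NN n A = 2" using nA by auto
    show ?thesis
    proof (cases "B k \<le> -1 \<or> NN n B \<le> 1")
      case Bfine: True
      from one_fail[OF k Wabove NW Ak Bfine pB nB nWA nWB]
      show ?thesis .
    next
      case Bfail: False
      then have Bk: "0 \<le> B k" "NN n B = 2" using nB by auto
      have Avan: "A i = 0" if "k \<le> i" "i < n" for i
        using F1[OF k Wabove Ak(1) nWA NW nA] that by auto
      have Bvan: "B i = 0" if "k \<le> i" "i < n" for i
        using F1[OF k Wabove Bk(1) nWB NW nB] that by auto
      obtain j where j: "j < n" "(1 \<le> A j \<and> 1 \<le> B j) \<or> (A j \<le> -1 \<and> B j \<le> -1)"
        using common_unit[OF Ak(2) Bk(2) nAB] by auto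
      have jk: "j < k"
      proof (rule ccontr)
        assume "\<not> j < k"
        then have "A j = 0" using Avan j(1) by simp
        with j(2) show False by auto
      qed
      define s :: int where "s = (if 0 < A j then 1 else -1)"
      define W' where "W' = (\<lambda>i. (0::int))(k := -1, j := s)"
      have Ak0: "A k = 0" using Avan k by auto
      have Bk0: "B k = 0" using Bvan k by auto
      have "NN n (\<lambda>i. W' i - A i) = NN n A - \<bar>A k\<bar> + \<bar>-1 - A k\<bar> - \<bar>A j\<bar> + \<bar>s - A j\<bar>"
        unfolding W'_def by (rule two_pt) (use j k jk in auto)
      also have "\<dots> = 2" using Ak Ak0 j(2) unfolding s_def by auto
      finally have 1: "NN n (\<lambda>i. W' i - A i) \<le> 2" by simp
      have "NN n (\<lambda>i. W' i - B i) = NN n B - \<bar>B k\<bar> + \<bar>-1 - B k\<bar> - \<bar>B j\<bar> + \<bar>s - B j\<bar>"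
        unfolding W'_def by (rule two_pt) (use j k jk in auto)
      also have "\<dots> = 2" using Bk Bk0 j(2) unfolding s_def by auto
      finally have 2: "NN n (\<lambda>i. W' i - B i) \<le> 2" by simp
      have 3: "NN n W' \<le> 2" unfolding W'_def using NN_two_pt[of j n k s] j k jk by (auto simp: s_def)
      have 4: "negv n W'" unfolding W'_def using negv_two_pt[OF jk k(1)] .
      have 5: "\<forall>i<n. feas (W' i) (W i) (A i) (B i)"
        using k j(2) jk unfolding W'_def feas_def s_def by auto
      show ?thesis using 1 2 3 4 5 by blast
    qed
  qed
qed



lemma natdist: "int (p - q) + int (q - p) = \<bar>int p - int q\<bar>"
  by (cases "p \<le> q") (auto simp: of_nat_diff)

lemma manhattan_int: "length x = n \<Longrightarrow> int (manhattan x y) = NN n (\<lambda>i. int (x!i) - int (y!i))"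
  unfolding manhattan_def NN_def by (simp add: of_nat_sum natdist)

lemma manhattan_sym: "length x = length y \<Longrightarrow> manhattan x y = manhattan y x"
  unfolding manhattan_def by (intro sum.cong) auto

lemma manhattan_self: "manhattan x x = 0"
  unfolding manhattan_def by simp

lemma grid_len: "x \<in> grid n m \<Longrightarrow> length x = n"
  by (simp add: grid_def)

lemma G_list:
  assumes g: "a \<in> grid n m" "b \<in> grid n m" "c \<in> grid n m" "w \<in> grid n m"
    and o: "antilex_less w c" "antilex_less c a" "antilex_less c b"
    and d: "manhattan c a \<le> 2" "manhattan c b \<le> 2" "manhattan a b \<le> 2" "manhattan w a \<le> 2" "manhattan w b \<le> 2"
  shows "\<exists>w'\<in>grid n m. antilex_less w' c \<and> manhattan w' a \<le> 2 \<and> manhattan w' b \<le> 2 \<and> manhattan w' c \<le> 2"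
proof -
  have len: "length a = n" "length b = n" "length c = n" "length w = n" using g by (auto simp: grid_def)
  have bnd: "\<And>i. i < n \<Longrightarrow> a!i \<le> m \<and> b!i \<le> m \<and> c!i \<le> m \<and> w!i \<le> m" using g by (auto simp: grid_def)
  define A where "A = (\<lambda>i. int (a!i) - int (c!i))"
  define B where "B = (\<lambda>i. int (b!i) - int (c!i))"
  define W where "W = (\<lambda>i. int (w!i) - int (c!i))"
  have rel: "NN n (\<lambda>i. (int (x!i) - int (c!i)) - (int (y!i) - int (c!i))) = int (manhattan x y)"
    if "length x = n" for x y
    using manhattan_int[OF that, of y] by simp
  have pA: "posv n A" using o(2) len unfolding posv_def antilex_less_def A_def by force
  have pB: "posv n B" using o(3) len unfolding posv_def antilex_less_def B_def by force
  have nW: "negv n W" using o(1) len unfolding negv_def antilex_less_def W_def by force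
  have nA: "NN n A \<le> 2"
  proof -
    have "NN n A = NN n (\<lambda>i. (int (c!i) - int (c!i)) - (int (a!i) - int (c!i)))"
      unfolding A_def by (subst NN_swap) simp
    also have "\<dots> = int (manhattan c a)" by (rule rel) (rule len)
    finally show ?thesis using d(1) by simp
  qed
  have nB: "NN n B \<le> 2"
  proof -
    have "NN n B = NN n (\<lambda>i. (int (c!i) - int (c!i)) - (int (b!i) - int (c!i)))"
      unfolding B_def by (subst NN_swap) simp
    also have "\<dots> = int (manhattan c b)" by (rule rel) (rule len)
    finally show ?thesis using d(2) by simp
  qed
  have nAB: "NN n (\<lambda>i. A i - B i) \<le> 2" using rel[OF len(1), of b] d(3) unfolding A_def B_def by simp
  have nWA: "NN n (\<lambda>i. W i - A i) \<le> 2" using rel[OF len(4), of a] d(4) unfolding A_def W_def by simp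
  have nWB: "NN n (\<lambda>i. W i - B i) \<le> 2" using rel[OF len(4), of b] d(5) unfolding B_def W_def by simp
  obtain W' where W': "negv n W'" "NN n W' \<le> 2" "NN n (\<lambda>i. W' i - A i) \<le> 2" "NN n (\<lambda>i. W' i - B i) \<le> 2"
    "\<forall>i<n. feas (W' i) (W i) (A i) (B i)"
    using core[OF pA pB nW nA nB nAB nWA nWB] by blast
  define w' where "w' = map (\<lambda>i. nat (int (c!i) + W' i)) [0..<n]"
  have val: "int (c!i) + W' i \<ge> 0 \<and> int (c!i) + W' i \<le> int m" if "i < n" for i
    using W'(5) that bnd[OF that] unfolding feas_def A_def B_def W_def by auto
  have wv: "int (w'!i) = int (c!i) + W' i" if "i < n" for i
    using val[OF that] that unfolding w'_def by simp
  have lw: "length w' = n" unfolding w'_def by simp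
  have gw: "w' \<in> grid n m"
  proof -
    have "w'!i \<le> m" if "i < n" for i using val[OF that] wv[OF that] by linarith
    then show ?thesis unfolding grid_def using lw by auto
  qed
  have ow: "antilex_less w' c"
  proof -
    obtain i where i: "i < n" "W' i < 0" "\<forall>j. i < j \<and> j < n \<longrightarrow> W' j = 0"
      using W'(1) unfolding negv_def by auto
    have "w'!i < c!i" using wv[OF i(1)] i(2) by simp
    moreover have "\<forall>j. i < j \<and> j < n \<longrightarrow> w'!j = c!j"
      using wv i(3) by (metis add.right_neutral of_nat_eq_iff)
    ultimately show ?thesis unfolding antilex_less_def using lw i(1) by auto
  qed
  have dist: "int (manhattan w' x) = NN n (\<lambda>i. W' i - (int (x!i) - int (c!i)))" for x
  proof -
    have "int (manhattan w' x) = NN n (\<lambda>i. int (w'!i) - int (x!i))" by (rule manhattan_int) (rule lw)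
    also have "\<dots> = NN n (\<lambda>i. W' i - (int (x!i) - int (c!i)))"
      unfolding NN_def by (intro sum.cong) (auto simp: wv)
    finally show ?thesis .
  qed
  have "manhattan w' a \<le> 2" using dist[of a] W'(3) unfolding A_def by simp
  moreover have "manhattan w' b \<le> 2" using dist[of b] W'(4) unfolding B_def by simp
  moreover have "manhattan w' c \<le> 2" using dist[of c] W'(2) by simp
  ultimately show ?thesis using gw ow by blast
qed



lemma antilex_irrefl: "\<not> antilex_less x x"
  by (simp add: antilex_less_def)

lemma antilex_trans:
  assumes len: "length x = length y" "length y = length z" and "antilex_less x y" "antilex_less y z"
  shows "antilex_less x z"
proof -
  obtain i where i: "i < length x" "x!i < y!i" and ia: "\<And>l. i < l \<Longrightarrow> l < length x \<Longrightarrow> x!l = y!l"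
    using assms(3) unfolding antilex_less_def by auto
  obtain j where j: "j < length y" "y!j < z!j" and ja: "\<And>l. j < l \<Longrightarrow> l < length y \<Longrightarrow> y!l = z!l"
    using assms(4) unfolding antilex_less_def by auto
  define p where "p = max i j"
  have p: "p < length x" using i j len unfolding p_def by auto
  have "x!p < z!p"
  proof (cases "i < j")
    case True
    then have "p = j" unfolding p_def by simp
    then show ?thesis using ia[of j] True j len by simp
  next
    case False
    then have pi: "p = i" unfolding p_def by simp
    show ?thesis
    proof (cases "i = j")
      case True then show ?thesis using pi i j by simp
    next
      case False
      then have "j < i" using \<open>\<not> i < j\<close> by simp
      then show ?thesis using pi i ja[of i] len by simp
    qed
  qed
  moreover have "x!l = z!l" if "p < l" "l < length x" for l
  proof -
    have "i < l" "j < l" using that unfolding p_def by auto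
    then show ?thesis using ia[of l] ja[of l] that len by simp
  qed
  ultimately show ?thesis unfolding antilex_less_def using p by blast
qed

lemma antilex_total:
  assumes "length x = length y" "x \<noteq> y"
  shows "antilex_less x y \<or> antilex_less y x"
proof -
  define S where "S = {i. i < length x \<and> x!i \<noteq> y!i}"
  have "S \<noteq> {}" using assms nth_equalityI unfolding S_def by blast
  moreover have fS: "finite S" unfolding S_def by simp
  ultimately have p: "Max S \<in> S" by (rule Max_in[rotated])
  have above: "x!j = y!j" if "Max S < j" "j < length x" for j
  proof (rule ccontr)
    assume "x!j \<noteq> y!j"
    then have "j \<in> S" unfolding S_def using that by simp
    then have "j \<le> Max S" using Max_ge[OF fS] by simp
    then show False using that by simp
  qed
  have pl: "Max S < length x" and pne: "x ! Max S \<noteq> y ! Max S" using p unfolding S_def by auto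
  show ?thesis
  proof (cases "x ! Max S < y ! Max S")
    case True
    then have "antilex_less x y" unfolding antilex_less_def using pl above by blast
    then show ?thesis by simp
  next
    case False
    then have "y ! Max S < x ! Max S" using pne by simp
    moreover have "y!j = x!j" if "Max S < j" "j < length y" for j using above[of j] that assms(1) by simp
    ultimately have "antilex_less y x" unfolding antilex_less_def using pl assms(1) by auto
    then show ?thesis by simp
  qed
qed



lemma sorted_exists:
  assumes tr: "\<And>x y z. x \<in> S \<Longrightarrow> y \<in> S \<Longrightarrow> z \<in> S \<Longrightarrow> R x y \<Longrightarrow> R y z \<Longrightarrow> R x z"
    and tot: "\<And>x y. x \<in> S \<Longrightarrow> y \<in> S \<Longrightarrow> x \<noteq> y \<Longrightarrow> R x y \<or> R y x"
  shows "finite F \<Longrightarrow> F \<subseteq> S \<Longrightarrow> \<exists>xs. set xs = F \<and> sorted_wrt R xs"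
proof (induction F rule: finite_induct)
  case empty
  then show ?case by auto
next
  case (insert x F)
  then obtain ys where ys: "set ys = F" "sorted_wrt R ys" by auto
  define xs where "xs = filter (\<lambda>y. R y x) ys @ x # filter (\<lambda>y. R x y) ys"
  have "set xs = insert x F"
  proof
    show "set xs \<subseteq> insert x F" unfolding xs_def using ys by auto
    show "insert x F \<subseteq> set xs"
    proof
      fix y assume "y \<in> insert x F"
      then show "y \<in> set xs"
      proof
        assume "y = x" then show ?thesis unfolding xs_def by simp
      next
        assume y: "y \<in> F"
        then have "y \<noteq> x" using insert.hyps by auto
        then have "R y x \<or> R x y" using tot y insert.prems by blast
        then show ?thesis unfolding xs_def using y ys by auto
      qed
    qed
  qed
  moreover have "sorted_wrt R xs"
    unfolding xs_def sorted_wrt_append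
  proof (intro conjI)
    show "sorted_wrt R (filter (\<lambda>y. R y x) ys)" by (rule sorted_wrt_filter) (rule ys(2))
    show "sorted_wrt R (x # filter (\<lambda>y. R x y) ys)"
      using sorted_wrt_filter[OF ys(2)] by auto
    show "\<forall>a\<in>set (filter (\<lambda>y. R y x) ys). \<forall>b\<in>set (x # filter (R x) ys). R a b"
    proof (intro ballI)
      fix a b assume a: "a \<in> set (filter (\<lambda>y. R y x) ys)" and b: "b \<in> set (x # filter (R x) ys)"
      have aS: "a \<in> S" and ax: "R a x" using a ys(1) insert.prems by auto
      show "R a b"
      proof (cases "b = x")
        case True then show ?thesis using ax by simp
      next
        case False
        then have bS: "b \<in> S" and xb: "R x b" using b ys(1) insert.prems by auto
        show ?thesis using tr[OF aS _ bS ax xb] insert.prems by simp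
      qed
    qed
  qed
  ultimately show ?case by blast
qed



lemma sorted_unique:
  assumes tr: "\<And>x y z. x \<in> S \<Longrightarrow> y \<in> S \<Longrightarrow> z \<in> S \<Longrightarrow> R x y \<Longrightarrow> R y z \<Longrightarrow> R x z"
    and irr: "\<And>x. x \<in> S \<Longrightarrow> \<not> R x x"
  shows "set xs \<subseteq> S \<Longrightarrow> set ys = set xs \<Longrightarrow> sorted_wrt R xs \<Longrightarrow> sorted_wrt R ys \<Longrightarrow> xs = ys"
proof (induction xs arbitrary: ys)
  case Nil
  then show ?case by simp
next
  case (Cons x xs)
  then obtain y ys' where ys: "ys = y # ys'" by (cases ys) auto
  have xy: "x = y"
  proof (rule ccontr)
    assume ne: "x \<noteq> y"
    have "y \<in> set xs" using Cons.prems ys ne by auto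
    then have "R x y" using Cons.prems(3) by auto
    moreover have "x \<in> set ys'" using Cons.prems ys ne by (metis list.set_intros(1) set_ConsD)
    then have "R y x" using Cons.prems(4) ys by auto
    moreover have "x \<in> S" "y \<in> S" using Cons.prems(1,2) ys by auto
    ultimately show False using tr[of x y x] irr[of x] by simp
  qed
  have "x \<notin> set xs" using Cons.prems(1,3) irr by auto
  moreover have "y \<notin> set ys'"
  proof -
    have "y \<in> S" using Cons.prems(1,2) ys by auto
    then show ?thesis using Cons.prems(4) ys irr[of y] by auto
  qed
  ultimately have "set ys' = set xs" using Cons.prems(2) ys xy by auto
  then have "xs = ys'" using Cons.IH Cons.prems ys by auto
  then show ?case using xy ys by simp
qed



lemma finite_grid: "finite (grid n m)"
proof -
  have "grid n m \<subseteq> {xs. set xs \<subseteq> {0..m} \<and> length xs = n}"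
  proof
    fix x assume x: "x \<in> grid n m"
    have "set x \<subseteq> {0..m}"
    proof
      fix v assume "v \<in> set x"
      then obtain i where "i < length x" "x!i = v" by (auto simp: in_set_conv_nth)
      then show "v \<in> {0..m}" using x unfolding grid_def by auto
    qed
    then show "x \<in> {xs. set xs \<subseteq> {0..m} \<and> length xs = n}" using x unfolding grid_def by simp
  qed
  moreover have "finite {xs. set xs \<subseteq> {0..m} \<and> length xs = n}"
    by (rule finite_lists_length_eq) simp
  ultimately show ?thesis by (rule finite_subset)
qed



lemma vertex_list_props:
  "set (vertex_list n m) = grid n m \<and> sorted_wrt antilex_less (vertex_list n m)"
proof -
  have tr: "antilex_less x z" if "x \<in> grid n m" "y \<in> grid n m" "z \<in> grid n m" "antilex_less x y" "antilex_less y z" for x y z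
    using antilex_trans[of x y z] grid_len[OF that(1)] grid_len[OF that(2)] grid_len[OF that(3)] that(4,5) by simp
  have tot: "antilex_less x y \<or> antilex_less y x" if "x \<in> grid n m" "y \<in> grid n m" "x \<noteq> y" for x y
    using antilex_total[of x y] grid_len[OF that(1)] grid_len[OF that(2)] that(3) by simp
  have "\<exists>xs. set xs = grid n m \<and> sorted_wrt antilex_less xs"
    apply (rule sorted_exists[where S="grid n m" and R=antilex_less])
    apply (rule tr; assumption)
    apply (rule tot; assumption)
    apply (rule finite_grid)
    apply (rule order_refl)
    done
  then obtain xs where xs: "set xs = grid n m" "sorted_wrt antilex_less xs" by blast
  have "\<exists>!vs. set vs = grid n m \<and> sorted_wrt antilex_less vs"
  proof (rule ex1I[of _ xs])
    show "set xs = grid n m \<and> sorted_wrt antilex_less xs" using xs by simp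
    fix vs assume vs: "set vs = grid n m \<and> sorted_wrt antilex_less vs"
    have "xs = vs"
      apply (rule sorted_unique[where S="grid n m" and R=antilex_less])
      apply (rule tr; assumption)
      apply (rule antilex_irrefl)
      using xs vs by auto
    then show "vs = xs" by simp
  qed
  then show ?thesis unfolding vertex_list_def by (rule theI')
qed

lemma sorted_distinct: "sorted_wrt R xs \<Longrightarrow> (\<And>x. \<not> R x x) \<Longrightarrow> distinct xs"
proof (induction xs)
  case Nil then show ?case by simp
next
  case (Cons a xs)
  have "a \<notin> set xs" using Cons.prems by auto
  moreover have "distinct xs" using Cons by simp
  ultimately show ?case by simp
qed



lemma match_step_sub: "match_step T v \<subseteq> T"
  unfolding match_step_def by auto

lemma foldl_sub: "foldl match_step T xs \<subseteq> T"
proof (induction xs arbitrary: T)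
  case Nil then show ?case by simp
next
  case (Cons x xs)
  then show ?case using match_step_sub[of T x] by force
qed

lemma survive:
  "T \<subseteq> D \<Longrightarrow> \<rho> \<in> T \<Longrightarrow> (\<forall>v\<in>set xs. v \<notin> \<rho> \<and> insert v \<rho> \<notin> D) \<Longrightarrow> \<rho> \<in> foldl match_step T xs"
proof (induction xs arbitrary: T)
  case Nil then show ?case by simp
next
  case (Cons x xs)
  have "\<rho> \<in> match_step T x"
  proof -
    have "\<rho> \<notin> match_set T x" using Cons.prems unfolding match_set_def by auto
    moreover have "\<rho> \<notin> (insert x) ` match_set T x" using Cons.prems by auto
    ultimately show ?thesis using Cons.prems(2) unfolding match_step_def by auto
  qed
  moreover have "match_step T x \<subseteq> D" using match_step_sub[of T x] Cons.prems(1) by auto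
  ultimately show ?case using Cons.IH Cons.prems(3) by simp
qed

lemma kill:
  assumes "\<rho> \<in> T" "insert v \<rho> \<in> T" "v \<notin> \<rho>"
  shows "\<rho> \<notin> match_step T v" "insert v \<rho> \<notin> match_step T v"
proof -
  have m: "\<rho> \<in> match_set T v" using assms unfolding match_set_def by auto
  then show "\<rho> \<notin> match_step T v" unfolding match_step_def by auto
  from m show "insert v \<rho> \<notin> match_step T v" unfolding match_step_def by auto
qed

lemma Delta_iff: "\<sigma> \<in> Delta n m \<longleftrightarrow> \<sigma> \<subseteq> grid n m \<and> finite \<sigma> \<and> (\<forall>x\<in>\<sigma>. \<forall>y\<in>\<sigma>. manhattan x y \<le> 2)"
  unfolding Delta_def VR_def by simp

lemma Delta_sub: "\<tau> \<in> Delta n m \<Longrightarrow> \<rho> \<subseteq> \<tau> \<Longrightarrow> \<rho> \<in> Delta n m"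
  unfolding Delta_iff by (auto intro: finite_subset)

theorem main:
  fixes n m :: nat
  shows "\<forall>\<sigma>\<in>critical_cells n m. card \<sigma> - 1 \<noteq> 2"
proof (intro ballI notI)
  fix \<sigma> assume crit: "\<sigma> \<in> critical_cells n m" and c3: "card \<sigma> - 1 = 2"
  define vs where "vs = vertex_list n m"
  define D where "D = Delta n m"
  have vsset: "set vs = grid n m" and vssort: "sorted_wrt antilex_less vs"
    using vertex_list_props[of n m] unfolding vs_def by auto
  have vsdist: "distinct vs" using sorted_distinct[OF vssort] antilex_irrefl by blast
  have critdef: "critical_cells n m = foldl match_step D vs" unfolding critical_cells_def vs_def D_def by simp
  have \<sigma>D: "\<sigma> \<in> D" using crit foldl_sub[of D vs] unfolding critdef by auto
  then have \<sigma>grid: "\<sigma> \<subseteq> grid n m" and \<sigma>fin: "finite \<sigma>"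
    and \<sigma>dist: "\<forall>x\<in>\<sigma>. \<forall>y\<in>\<sigma>. manhattan x y \<le> 2" unfolding D_def Delta_iff by auto
  have card3: "card \<sigma> = 3" using c3 by simp
  define Cand where "Cand = {u \<in> grid n m. insert u \<sigma> \<in> D}"
  have \<sigma>Cand: "\<sigma> \<subseteq> Cand"
  proof
    fix u assume u: "u \<in> \<sigma>"
    then have "insert u \<sigma> = \<sigma>" by (rule insert_absorb)
    then show "u \<in> Cand" unfolding Cand_def using u \<sigma>grid \<sigma>D by auto
  qed
  have "\<sigma> \<noteq> {}" using card3 by auto
  then obtain x0 where x0: "x0 \<in> \<sigma>" by blast
  have "x0 \<in> set vs" using x0 \<sigma>grid vsset by blast
  then obtain i0 where i0: "i0 < length vs" "vs ! i0 = x0" using in_set_conv_nth[of x0 vs] by auto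
  define P where "P = (\<lambda>i. i < length vs \<and> vs ! i \<in> Cand)"
  have Pi0: "P i0" unfolding P_def using i0 x0 \<sigma>Cand by auto
  define k where "k = (LEAST i. P i)"
  have Pk: "P k" unfolding k_def using Pi0 by (rule LeastI)
  then have k: "k < length vs" and cC: "vs ! k \<in> Cand" unfolding P_def by auto
  have before: "vs ! j \<notin> Cand" if "j < k" for j
  proof -
    have "\<not> P j" using not_less_Least[of j P] that unfolding k_def by simp
    then show ?thesis using that k unfolding P_def by simp
  qed
  define c where "c = vs ! k"
  have cgrid: "c \<in> grid n m" using nth_mem[OF k] vsset unfolding c_def by simp
  have lt_before: "antilex_less (vs ! j) c" if "j < k" for j
    using sorted_wrt_nth_less[OF vssort that k] unfolding c_def .
  have idx: "\<exists>i<length vs. vs ! i = u" if "u \<in> grid n m" for u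
    using that vsset in_set_conv_nth[of u vs] by auto
  have below_notcand: "u \<notin> Cand" if ug: "u \<in> grid n m" and uc: "antilex_less u c" for u
  proof -
    obtain j where j: "j < length vs" "vs ! j = u" using idx[OF ug] by blast
    have "j < k"
    proof (rule ccontr)
      assume "\<not> j < k"
      then consider "j = k" | "k < j" by linarith
      then show False
      proof cases
        case 1 then show False using uc j antilex_irrefl unfolding c_def by auto
      next
        case 2
        then have "antilex_less c u" using sorted_wrt_nth_less[OF vssort 2 j(1)] j unfolding c_def by simp
        moreover have "length c = n" "length u = n" using cgrid ug grid_len by auto
        ultimately have "antilex_less c c" using antilex_trans[of c u c] uc by simp
        then show False using antilex_irrefl by simp
      qed
    qed
    then show ?thesis using before j by auto
  qed
  have after: "antilex_less c u" if uC: "u \<in> Cand" and uc: "u \<noteq> c" for u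
  proof -
    have ug: "u \<in> grid n m" using uC unfolding Cand_def by auto
    obtain j where j: "j < length vs" "vs ! j = u" using idx[OF ug] by blast
    have "\<not> j < k" using before j uC by auto
    moreover have "j \<noteq> k" using j uc unfolding c_def by auto
    ultimately have "k < j" by simp
    then show ?thesis using sorted_wrt_nth_less[OF vssort _ j(1)] j unfolding c_def by simp
  qed
  have take_facts: "\<exists>j<k. v = vs ! j" if "v \<in> set (take k vs)" for v
    using that k by (auto simp: in_set_conv_nth)
  have \<sigma>_before: "\<forall>v\<in>set (take k vs). v \<notin> \<sigma> \<and> insert v \<sigma> \<notin> D"
  proof
    fix v assume "v \<in> set (take k vs)"
    then obtain j where j: "j < k" "v = vs ! j" using take_facts by blast
    have vg: "v \<in> grid n m" using nth_mem[of j vs] j k vsset by simp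
    have "v \<notin> Cand" using before j by simp
    then show "v \<notin> \<sigma> \<and> insert v \<sigma> \<notin> D" using \<sigma>Cand vg unfolding Cand_def by auto
  qed
  have DD: "D \<subseteq> D" by simp
  have \<sigma>T: "\<sigma> \<in> foldl match_step D (take k vs)" by (rule survive[OF DD \<sigma>D \<sigma>_before])
  define Tk where "Tk = foldl match_step D (take k vs)"
  have vs_split: "vs = take k vs @ [c] @ drop (Suc k) vs" unfolding c_def using k by (simp add: id_take_nth_drop)
  have "foldl match_step D vs = foldl match_step D (take k vs @ [c] @ drop (Suc k) vs)"
    using vs_split by (rule arg_cong[where f="foldl match_step D"])
  also have "\<dots> = foldl match_step (match_step Tk c) (drop (Suc k) vs)"
    unfolding Tk_def by simp
  finally have "critical_cells n m = foldl match_step (match_step Tk c) (drop (Suc k) vs)"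
    unfolding critdef .
  then have crit_sub: "critical_cells n m \<subseteq> match_step Tk c"
    using foldl_sub[of "match_step Tk c" "drop (Suc k) vs"] by simp
  have v_ne_c: "v \<noteq> c" if vin: "v \<in> set (take k vs)" for v
  proof -
    obtain j where j: "j < k" "v = vs ! j" using take_facts vin by blast
    then show ?thesis using vsdist k unfolding c_def by (simp add: nth_eq_iff_index_eq)
  qed
  show False
  proof (cases "c \<in> \<sigma>")
    case False
    have icD: "insert c \<sigma> \<in> D" using cC unfolding c_def Cand_def by simp
    have "\<forall>v\<in>set (take k vs). v \<notin> insert c \<sigma> \<and> insert v (insert c \<sigma>) \<notin> D"
    proof
      fix v assume v: "v \<in> set (take k vs)"
      have "v \<notin> insert c \<sigma>" using v_ne_c[OF v] \<sigma>_before v by auto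
      moreover have "insert v (insert c \<sigma>) \<notin> D"
      proof
        assume "insert v (insert c \<sigma>) \<in> D"
        then have "insert v \<sigma> \<in> D" unfolding D_def by (rule Delta_sub) auto
        then show False using \<sigma>_before v by auto
      qed
      ultimately show "v \<notin> insert c \<sigma> \<and> insert v (insert c \<sigma>) \<notin> D" by simp
    qed
    then have "insert c \<sigma> \<in> Tk" unfolding Tk_def by (rule survive[OF DD icD])
    then have "\<sigma> \<notin> match_step Tk c" using kill(1)[of \<sigma> Tk c] \<sigma>T False unfolding Tk_def by simp
    then show False using crit crit_sub by auto
  next
    case True
    define \<rho> where "\<rho> = \<sigma> - {c}"
    have \<sigma>eq: "\<sigma> = insert c \<rho>" unfolding \<rho>_def using True by auto
    have cnr: "c \<notin> \<rho>" unfolding \<rho>_def by simp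
    have "card \<rho> = 2" unfolding \<rho>_def using card3 True \<sigma>fin by simp
    then obtain a b where ab: "\<rho> = {a, b}" "a \<noteq> b" by (meson card_2_iff)
    have abs: "a \<in> \<sigma>" "b \<in> \<sigma>" "a \<noteq> c" "b \<noteq> c" using ab cnr \<sigma>eq by auto
    have \<rho>D: "\<rho> \<in> D" using \<sigma>D unfolding D_def \<rho>_def by (rule Delta_sub) auto
    have \<rho>_before: "\<forall>v\<in>set (take k vs). v \<notin> \<rho> \<and> insert v \<rho> \<notin> D"
    proof
      fix v assume v: "v \<in> set (take k vs)"
      obtain j where j: "j < k" "v = vs ! j" using take_facts v by blast
      have vg: "v \<in> grid n m" using nth_mem[of j vs] j k vsset by simp
      have "v \<notin> \<rho>" using \<sigma>_before v unfolding \<rho>_def by auto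
      moreover have "insert v \<rho> \<notin> D"
      proof
        assume ivD: "insert v \<rho> \<in> D"
        have ag: "a \<in> grid n m" and bg: "b \<in> grid n m" using abs \<sigma>grid by auto
        have o1: "antilex_less v c" using lt_before j by simp
        have o2: "antilex_less c a" using after abs \<sigma>Cand by auto
        have o3: "antilex_less c b" using after abs \<sigma>Cand by auto
        have d1: "manhattan c a \<le> 2" "manhattan c b \<le> 2" "manhattan a b \<le> 2"
          using \<sigma>dist abs True by auto
        have d2: "manhattan v a \<le> 2" "manhattan v b \<le> 2"
          using ivD unfolding D_def Delta_iff ab(1) by auto
        obtain w' where w': "w' \<in> grid n m" "antilex_less w' c" "manhattan w' a \<le> 2"
          "manhattan w' b \<le> 2" "manhattan w' c \<le> 2"
          using G_list[OF ag bg cgrid vg o1 o2 o3 d1 d2] by blast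
        have lens: "length w' = n" "length a = n" "length b = n" "length c = n"
          using w'(1) ag bg cgrid grid_len by auto
        have "insert w' \<sigma> \<in> D"
          unfolding D_def Delta_iff
        proof (intro conjI)
          show "insert w' \<sigma> \<subseteq> grid n m" using w'(1) \<sigma>grid by auto
          show "finite (insert w' \<sigma>)" using \<sigma>fin by simp
          have \<sigma>abc: "\<sigma> = {c, a, b}" using \<sigma>eq ab by auto
          have sym: "manhattan x w' \<le> 2" if "x \<in> \<sigma>" for x
          proof -
            have "x = c \<or> x = a \<or> x = b" using that \<sigma>abc by auto
            moreover have "manhattan c w' = manhattan w' c" "manhattan a w' = manhattan w' a"
              "manhattan b w' = manhattan w' b" using lens manhattan_sym by auto
            ultimately show ?thesis using w' by auto
          qed
          have fwd: "manhattan w' x \<le> 2" if "x \<in> \<sigma>" for x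
          proof -
            have "x = c \<or> x = a \<or> x = b" using that \<sigma>abc by auto
            then show ?thesis using w' by auto
          qed
          show "\<forall>x\<in>insert w' \<sigma>. \<forall>y\<in>insert w' \<sigma>. manhattan x y \<le> 2"
            using sym fwd \<sigma>dist manhattan_self[of w'] by auto
        qed
        then have "w' \<in> Cand" unfolding Cand_def using w'(1) by simp
        then show False using below_notcand[OF w'(1) w'(2)] by simp
      qed
      ultimately show "v \<notin> \<rho> \<and> insert v \<rho> \<notin> D" by simp
    qed
    have \<rho>T: "\<rho> \<in> Tk" unfolding Tk_def by (rule survive[OF DD \<rho>D \<rho>_before])
    have "insert c \<rho> \<in> Tk" using \<sigma>T \<sigma>eq unfolding Tk_def by simp
    then have "insert c \<rho> \<notin> match_step Tk c" using kill(2)[OF \<rho>T _ cnr] by simp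
    then show False using crit crit_sub \<sigma>eq by auto
  qed
qed


theorem lemma4p9:
  fixes n m :: nat
  assumes "n \<ge> 3" and "m \<ge> 1"
  shows "\<forall>\<sigma>\<in>critical_cells n m. card \<sigma> - 1 \<noteq> 2"
  by (rule main)

end
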